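(* Let $(T,E)$ be the $3$-regular tree, $x\in T$ and $y$ a neighbor of $x$. Define functions $u_t:\mathbb Z\to\mathbb Z$ for $t\ge 0$ recursively: $u_0[0]=u_0[-1]=1$ and $u_0[s]=0$ for all other $s$; given $u_t$, first define $u_{t+1}[s]$ for odd $s$ by $$u_{t+1}[s]=\begin{cases}2u_t[s-1]-u_t[s]+u_t[s+1] & s<0,\\ u_t[s-1]-u_t[s]+2u_t[s+1] & s>0,\end{cases}$$ and then for even $s$ by $$u_{t+1}[s]=\begin{cases}2u_{t+1}[s-1]-u_t[s]+u_{t+1}[s+1] & s<0,\\ u_{t+1}[s-1]-u_t[s]+2u_{t+1}[s+1] & s\ge 0.\end{cases}$$ Then for every $t\ge 0$: for $s\ge 0$, $u_t[s]=r_{2t}(x,y)_z$ for every $z\in T_s(x,y)$, and for $s\le -1$, $u_t[s]=r_{2t}(x,y)_z$ for every $z\in T'_{-s}(x,y)$; moreover $$f_{4t-1}=\sum_{s\ge 1,\ s\text{ odd}}2^s u_t[s]+\sum_{s\ge 1,\ s \text{ odd}}2^{s-1}u_t[-s],\qquad f_{4t+1}=\sum_{s\ge 0,\ s\text{ even}}2^s u_t[s]+\sum_{s\ge 2,\ s\text{ even}}2^{s-1}u_t[-s].$$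
   Context: $(f_i)_{i\in\mathbb Z}$ are the Fibonacci numbers with $f_0=0$, $f_1=1$, $f_{i+1}=f_i+f_{i-1}$ for all $i\in\mathbb Z$. $(T,E)$ is the $3$-regular tree with graph distance $d$. $K_0(T)$ is the free abelian group with basis $\{s(z):z\in T\}$, elements written $a=\sum_z a_z s(z)$. For $v\in T$ the reflection $\sigma^v$ on $K_0(T)$ is $(\sigma^v a)_z=a_z$ for $z\ne v$, $(\sigma^v a)_v=-a_v+\sum_{\{w,v\}\in E}a_w$. $\Sigma^x$ is the composition of all $\sigma^v$ with $d(x,v)$ even and $\underline\Sigma^x$ the composition of all $\sigma^v$ with $d(x,v)$ odd. For neighbors $x,y$: $r_0(x,y)=s(x)+s(y)$, and $r_{t+1}(x,y)=\underline\Sigma^x r_t(x,y)$ for $t$ even, $r_{t+1}(x,y)=\Sigma^x r_t(x,y)$ for $t$ odd. $T_s(x,y)$ is the set of vertices $z$ with $d(x,z)=s$ such that the path from $x$ to $z$ does not pass through $y$; $T'_s(x,y)$ is the set of vertices $z$ with $d(x,z)=s$ whose path from $x$ passes through $y$. *)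

theory Defs
  imports Main "HOL-Library.Groups_Big_Fun"
begin

function fibz :: "int \<Rightarrow> int" where
  "fibz n = (if n = 0 then 0 else if n = 1 then 1
             else if n > 1 then fibz (n - 1) + fibz (n - 2)
             else fibz (n + 2) - fibz (n + 1))"
  by auto
termination
  by (relation "measure (\<lambda>n. if n \<ge> 0 then nat (2 * n) else nat (1 - 2 * n))") auto

text \<open>Vertices: reduced words over the alphabet {0,1,2} (no two consecutive equal letters),
  i.e. the Cayley graph of the free product of three copies of Z/2, which is the 3-regular tree.\<close>

definition reduced_word :: "nat list \<Rightarrow> bool" where
  "reduced_word w \<longleftrightarrow> (\<forall>a\<in>set w. a < 3) \<and> (\<forall>i. Suc i < length w \<longrightarrow> w ! i \<noteq> w ! Suc i)"

typedef tree3 = "{w. reduced_word w}"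
  by (rule exI[of _ "[]"]) (simp add: reduced_word_def)

definition adj :: "tree3 \<Rightarrow> tree3 \<Rightarrow> bool" where
  "adj u v \<longleftrightarrow> (\<exists>a. Rep_tree3 v = a # Rep_tree3 u) \<or> (\<exists>a. Rep_tree3 u = a # Rep_tree3 v)"

definition walk :: "tree3 list \<Rightarrow> bool" where
  "walk p \<longleftrightarrow> p \<noteq> [] \<and> (\<forall>i. Suc i < length p \<longrightarrow> adj (p ! i) (p ! Suc i))"

definition dist :: "tree3 \<Rightarrow> tree3 \<Rightarrow> nat" where
  "dist x z = (LEAST n. \<exists>p. walk p \<and> hd p = x \<and> last p = z \<and> length p = Suc n)"

definition geodesic :: "tree3 list \<Rightarrow> tree3 \<Rightarrow> tree3 \<Rightarrow> bool" where
  "geodesic p x z \<longleftrightarrow> walk p \<and> hd p = x \<and> last p = z \<and> length p = Suc (dist x z)"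

definition Ts :: "tree3 \<Rightarrow> tree3 \<Rightarrow> nat \<Rightarrow> tree3 set" where
  "Ts x y s = {z. dist x z = s \<and> \<not> (\<exists>p. geodesic p x z \<and> y \<in> set p)}"

definition Ts' :: "tree3 \<Rightarrow> tree3 \<Rightarrow> nat \<Rightarrow> tree3 set" where
  "Ts' x y s = {z. dist x z = s \<and> (\<exists>p. geodesic p x z \<and> y \<in> set p)}"

text \<open>Elements of K_0(T) are represented by their coefficient functions tree3 => int
  (finitely supported ones form K_0(T)).\<close>

definition sgen :: "tree3 \<Rightarrow> tree3 \<Rightarrow> int" where
  "sgen v = (\<lambda>z. if z = v then 1 else 0)"

definition refl :: "tree3 \<Rightarrow> (tree3 \<Rightarrow> int) \<Rightarrow> (tree3 \<Rightarrow> int)" where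
  "refl v a = (\<lambda>z. if z = v then - a v + (\<Sum>w\<in>{w. adj w v}. a w) else a z)"

text \<open>Composition of all reflections at vertices of even (resp. odd) distance from x.
  These reflections pairwise commute (the vertices are pairwise non-adjacent), so the
  composition acts coordinatewise as the corresponding single reflection.\<close>

definition Sigma_even :: "tree3 \<Rightarrow> (tree3 \<Rightarrow> int) \<Rightarrow> (tree3 \<Rightarrow> int)" where
  "Sigma_even x a = (\<lambda>z. if even (dist x z) then refl z a z else a z)"

definition Sigma_odd :: "tree3 \<Rightarrow> (tree3 \<Rightarrow> int) \<Rightarrow> (tree3 \<Rightarrow> int)" where
  "Sigma_odd x a = (\<lambda>z. if odd (dist x z) then refl z a z else a z)"

primrec rr :: "tree3 \<Rightarrow> tree3 \<Rightarrow> nat \<Rightarrow> (tree3 \<Rightarrow> int)" where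
  "rr x y 0 = (\<lambda>z. sgen x z + sgen y z)"
| "rr x y (Suc t) = (if even t then Sigma_odd x (rr x y t) else Sigma_even x (rr x y t))"

definition u_odd :: "(int \<Rightarrow> int) \<Rightarrow> int \<Rightarrow> int" where
  "u_odd u s = (if s < 0 then 2 * u (s - 1) - u s + u (s + 1)
                else u (s - 1) - u s + 2 * u (s + 1))"

definition u_step :: "(int \<Rightarrow> int) \<Rightarrow> int \<Rightarrow> int" where
  "u_step u s = (if odd s then u_odd u s
                 else if s < 0 then 2 * u_odd u (s - 1) - u s + u_odd u (s + 1)
                 else u_odd u (s - 1) - u s + 2 * u_odd u (s + 1))"

primrec useq :: "nat \<Rightarrow> int \<Rightarrow> int" where
  "useq 0 = (\<lambda>s. if s = 0 \<or> s = -1 then 1 else 0)"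
| "useq (Suc t) = u_step (useq t)"

end

theory Submission
  imports Defs
begin


declare fibz.simps[simp del]

lemma fibz_rec: "fibz (n + 2) = fibz (n + 1) + fibz n"
proof (cases "n < 0")
  case True
  then show ?thesis using fibz.simps[of n] by simp
next
  case False
  then show ?thesis using fibz.simps[of "n+2"] by (simp add: add.commute)
qed

lemma fibz_rec4: "fibz (n + 4) = 3 * fibz (n + 2) - fibz n"
  using fibz_rec[of n] fibz_rec[of "n+1"] fibz_rec[of "n+2"]
  by (simp add: algebra_simps)

definition wt :: "int \<Rightarrow> int" where
  "wt s = (if s \<ge> 0 then 2 ^ nat s else 2 ^ nat (- s - 1))"

lemma wt_up: "m \<ge> 0 \<Longrightarrow> wt (m + 1) = 2 * wt m"
  by (simp add: wt_def nat_add_distrib)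

lemma wt_down: "m \<le> -1 \<Longrightarrow> wt (m - 1) = 2 * wt m"
proof -
  assume "m \<le> -1"
  then have "nat (- (m - 1) - 1) = Suc (nat (- m - 1))" by simp
  then show ?thesis using \<open>m \<le> -1\<close> by (simp add: wt_def)
qed

lemma wt_key: "wt (m + 1) * (if m + 1 < 0 then 2 else 1) + wt (m - 1) * (if m - 1 < 0 then 1 else 2) = 3 * wt m"
proof -
  consider "m \<ge> 1" | "m = 0" | "m = -1" | "m \<le> -2" by linarith
  then show ?thesis
  proof cases
    case 1
    then show ?thesis using wt_up[of m] wt_up[of "m - 1"] by simp
  next
    case 2
    then show ?thesis by (simp add: wt_def)
  next
    case 3
    then show ?thesis by (simp add: wt_def)
  next
    case 4
    then show ?thesis using wt_down[of m] wt_down[of "m + 1"] by simp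
  qed
qed

definition NN :: "(int \<Rightarrow> int) \<Rightarrow> int \<Rightarrow> int" where
  "NN f s = (if s < 0 then 2 * f (s - 1) + f (s + 1) else f (s - 1) + 2 * f (s + 1))"

lemma Sum_any_shift: "Sum_any (\<lambda>s::int. g (s + k)) = Sum_any g"
proof -
  have "bij (\<lambda>s::int. s + k)"
    by (rule bijI') (auto intro: exI[of _ "_ - k"])
  then show ?thesis
    by (rule Sum_any.reindex_cong[symmetric]) (simp add: comp_def)
qed

lemma Sum_any_neg: "Sum_any (\<lambda>s::int. g (- s)) = Sum_any g"
proof -
  have "bij (\<lambda>s::int. - s)"
    by (rule bijI') (auto intro: exI[of _ "- _"])
  then show ?thesis
    by (rule Sum_any.reindex_cong[symmetric]) (simp add: comp_def)
qed

lemma fin_supp: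
  assumes "\<And>s. g s \<noteq> 0 \<Longrightarrow> \<bar>s\<bar> < K" shows "finite {s::int. g s \<noteq> 0}"
proof (rule finite_subset[of _ "{-K..K}"])
  show "{s. g s \<noteq> 0} \<subseteq> {-K..K}"
  proof
    fix s assume "s \<in> {s. g s \<noteq> 0}"
    then have "\<bar>s\<bar> < K" using assms by auto
    then show "s \<in> {-K..K}" by auto
  qed
qed simp

lemma supp_shift:
  fixes u a :: "int \<Rightarrow> int"
  assumes supp: "\<And>s. M \<le> \<bar>s\<bar> \<Longrightarrow> u s = 0"
  shows "finite {s::int. a s * u (s + k) \<noteq> 0}"
proof (rule fin_supp[of _ "M + \<bar>k\<bar>"])
  fix s assume "a s * u (s + k) \<noteq> 0"
  then have "u (s + k) \<noteq> 0" by auto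
  then have "\<bar>s + k\<bar> < M" using supp by (meson not_le)
  then show "\<bar>s\<bar> < M + \<bar>k\<bar>" by linarith
qed

lemma KL:
  fixes u c :: "int \<Rightarrow> int"
  assumes supp: "\<And>s. M \<le> \<bar>s\<bar> \<Longrightarrow> u s = 0"
    and cc: "\<And>m. c (m + 1) = c (m - 1)"
  shows "Sum_any (\<lambda>s. c s * wt s * NN u s) = 3 * Sum_any (\<lambda>m. c (m + 1) * wt m * u m)"
proof -
  define a1 where "a1 s = c s * wt s * (if s < 0 then 2 else 1)" for s :: int
  define a2 where "a2 s = c s * wt s * (if s < 0 then 1 else 2)" for s :: int
  define g1 where "g1 s = a1 s * u (s + (-1))" for s
  define g2 where "g2 s = a2 s * u (s + 1)" for s
  have f1: "finite {s. g1 s \<noteq> 0}" unfolding g1_def by (rule supp_shift[OF supp])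
  have f2: "finite {s. g2 s \<noteq> 0}" unfolding g2_def by (rule supp_shift[OF supp])
  have "Sum_any (\<lambda>s. c s * wt s * NN u s) = Sum_any (\<lambda>s. g1 s + g2 s)"
    by (rule Sum_any.cong) (simp add: NN_def g1_def g2_def a1_def a2_def algebra_simps)
  also have "\<dots> = Sum_any g1 + Sum_any g2"
    using f1 f2 by (rule Sum_any.distrib)
  also have "Sum_any g1 = Sum_any (\<lambda>m. g1 (m + 1))" by (rule Sum_any_shift[symmetric])
  also have "Sum_any g2 = Sum_any (\<lambda>m. g2 (m + (-1)))" by (rule Sum_any_shift[symmetric])
  also have "Sum_any (\<lambda>m. g1 (m + 1)) + Sum_any (\<lambda>m. g2 (m + (-1))) = Sum_any (\<lambda>m. a1 (m + 1) * u m + a2 (m + (-1)) * u m)"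
  proof -
    have "Sum_any (\<lambda>m. a1 (m + 1) * u (m + 0) + a2 (m + (-1)) * u (m + 0)) = Sum_any (\<lambda>m. a1 (m + 1) * u (m + 0)) + Sum_any (\<lambda>m. a2 (m + (-1)) * u (m + 0))"
      by (rule Sum_any.distrib; rule supp_shift[OF supp])
    then show ?thesis by (simp add: g1_def g2_def)
  qed
  also have "\<dots> = Sum_any (\<lambda>m. 3 * (c (m + 1) * wt m * u m))"
  proof (rule Sum_any.cong)
    fix m
    have "a1 (m + 1) * u m + a2 (m + (-1)) * u m = c (m + 1) * u m * (wt (m + 1) * (if m + 1 < 0 then 2 else 1) + wt (m - 1) * (if m - 1 < 0 then 1 else 2))"
      using cc[of m] by (simp add: a1_def a2_def algebra_simps)
    also have "\<dots> = 3 * (c (m + 1) * wt m * u m)" unfolding wt_key by (simp add: ac_simps)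
    finally show "a1 (m + 1) * u m + a2 (m + (-1)) * u m = 3 * (c (m + 1) * wt m * u m)" .
  qed
  also have "\<dots> = 3 * Sum_any (\<lambda>m. c (m + 1) * wt m * u m)"
  proof -
    have "finite {m. c (m + 1) * wt m * u (m + 0) \<noteq> 0}" by (rule supp_shift[OF supp])
    then show ?thesis by (simp add: Sum_any_right_distrib)
  qed
  finally show ?thesis .
qed

lemma fin_supp2:
  fixes u g :: "int \<Rightarrow> int"
  assumes supp: "\<And>s. M \<le> \<bar>s\<bar> \<Longrightarrow> u s = 0" and gu: "\<And>s. g s \<noteq> 0 \<Longrightarrow> u s \<noteq> 0"
  shows "finite {s. g s \<noteq> 0}"
proof (rule fin_supp[of _ M])
  fix s assume "g s \<noteq> 0"
  then have "u s \<noteq> 0" by (rule gu)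
  then show "\<bar>s\<bar> < M" using supp by (meson not_le)
qed

lemma u_odd_zero:
  assumes supp: "\<And>s. K \<le> \<bar>s\<bar> \<Longrightarrow> u s = 0" and "K + 1 \<le> \<bar>s\<bar>"
  shows "u_odd u s = 0"
proof -
  have "u (s - 1) = 0" "u s = 0" "u (s + 1) = 0" using supp assms(2) by (smt (verit))+
  then show ?thesis by (simp add: u_odd_def)
qed

lemma u_step_zero:
  assumes supp: "\<And>s. K \<le> \<bar>s\<bar> \<Longrightarrow> u s = 0" and p: "K + 2 \<le> \<bar>s\<bar>"
  shows "u_step u s = 0"
proof -
  have a: "u_odd u s = 0" apply (rule u_odd_zero[where K = K]) using supp p by auto
  have b: "u_odd u (s - 1) = 0" apply (rule u_odd_zero[where K = K]) using supp p by auto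
  have c: "u_odd u (s + 1) = 0" apply (rule u_odd_zero[where K = K]) using supp p by auto
  have d: "u s = 0" using supp p by auto
  show ?thesis using a b c d by (simp add: u_step_def)
qed

lemma useq_supp: "2 * int t + 2 \<le> \<bar>s\<bar> \<Longrightarrow> useq t s = 0"
proof (induction t arbitrary: s)
  case 0
  then show ?case by auto
next
  case (Suc t)
  have p: "2 * int t + 4 \<le> \<bar>s\<bar>" using Suc.prems by simp
  have h: "\<And>s. 2 * int t + 2 \<le> \<bar>s\<bar> \<Longrightarrow> useq t s = 0" by (rule Suc.IH)
  have a: "u_odd (useq t) s = 0" apply (rule u_odd_zero[where K = "2 * int t + 2"]) using h p by auto
  have b: "u_odd (useq t) (s - 1) = 0" apply (rule u_odd_zero[where K = "2 * int t + 2"]) using h p by auto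
  have c: "u_odd (useq t) (s + 1) = 0" apply (rule u_odd_zero[where K = "2 * int t + 2"]) using h p by auto
  have d: "useq t s = 0" by (rule h) (use p in linarith)
  show ?case using a b c d by (simp add: u_step_def)
qed

lemma par: "even ((m::int) + 1) \<longleftrightarrow> even (m - 1)" by presburger

definition OS :: "(int \<Rightarrow> int) \<Rightarrow> int" where
  "OS u = Sum_any (\<lambda>s. (if odd s then 1 else 0) * wt s * u s)"

definition ES :: "(int \<Rightarrow> int) \<Rightarrow> int" where
  "ES u = Sum_any (\<lambda>s. (if even s then 1 else 0) * wt s * u s)"

lemma OS_step:
  fixes u :: "int \<Rightarrow> int"
  assumes supp: "\<And>s. M \<le> \<bar>s\<bar> \<Longrightarrow> u s = 0"
  shows "OS (u_step u) = 3 * ES u - OS u"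
proof -
  let ?c = "\<lambda>s::int. if odd s then 1 else 0 :: int"
  have "Sum_any (\<lambda>s. ?c s * wt s * NN u s) = 3 * Sum_any (\<lambda>m. ?c (m + 1) * wt m * u m)"
    apply (rule KL[where M = M]) apply (erule supp) by (metis par)
  also have "Sum_any (\<lambda>m. ?c (m + 1) * wt m * u m) = ES u"
    unfolding ES_def by (rule Sum_any.cong) simp
  also have "Sum_any (\<lambda>s. ?c s * wt s * NN u s) = Sum_any (\<lambda>s. ?c s * wt s * u_step u s + ?c s * wt s * u s)"
    by (rule Sum_any.cong) (simp add: NN_def u_step_def u_odd_def algebra_simps)
  also have "\<dots> = Sum_any (\<lambda>s. ?c s * wt s * u_step u s) + Sum_any (\<lambda>s. ?c s * wt s * u s)"
  proof (rule Sum_any.distrib)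
    show "finite {s. ?c s * wt s * u_step u s \<noteq> 0}"
    proof (rule fin_supp2[where u = "u_step u" and M = "M + 2"])
      fix s :: int assume "M + 2 \<le> \<bar>s\<bar>"
      then show "u_step u s = 0" using supp by (metis u_step_zero)
    qed simp
    show "finite {s. ?c s * wt s * u s \<noteq> 0}"
      by (rule fin_supp2[OF supp]) auto
  qed
  finally show ?thesis unfolding OS_def by simp
qed

lemma ES_step:
  fixes u :: "int \<Rightarrow> int"
  assumes supp: "\<And>s. M \<le> \<bar>s\<bar> \<Longrightarrow> u s = 0"
  shows "ES (u_step u) = 3 * OS (u_step u) - ES u"
proof -
  let ?c = "\<lambda>s::int. if even s then 1 else 0 :: int"
  have supp1: "\<And>s. M + 1 \<le> \<bar>s\<bar> \<Longrightarrow> u_odd u s = 0" by (rule u_odd_zero[OF supp])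
  have "Sum_any (\<lambda>s. ?c s * wt s * NN (u_odd u) s) = 3 * Sum_any (\<lambda>m. ?c (m + 1) * wt m * u_odd u m)"
    apply (rule KL[where M = "M + 1"]) apply (erule supp1) by (metis par)
  also have "Sum_any (\<lambda>m. ?c (m + 1) * wt m * u_odd u m) = OS (u_step u)"
    unfolding OS_def by (rule Sum_any.cong) (simp add: u_step_def)
  also have "Sum_any (\<lambda>s. ?c s * wt s * NN (u_odd u) s) = Sum_any (\<lambda>s. ?c s * wt s * u_step u s + ?c s * wt s * u s)"
    by (rule Sum_any.cong) (simp add: NN_def u_step_def algebra_simps)
  also have "\<dots> = Sum_any (\<lambda>s. ?c s * wt s * u_step u s) + Sum_any (\<lambda>s. ?c s * wt s * u s)"
  proof (rule Sum_any.distrib)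
    show "finite {s. ?c s * wt s * u_step u s \<noteq> 0}"
    proof (rule fin_supp2[where u = "u_step u" and M = "M + 2"])
      fix s :: int assume "M + 2 \<le> \<bar>s\<bar>"
      then show "u_step u s = 0" using supp by (metis u_step_zero)
    qed simp
    show "finite {s. ?c s * wt s * u s \<noteq> 0}"
      by (rule fin_supp2[OF supp]) auto
  qed
  finally show ?thesis unfolding ES_def by simp
qed

lemma OS_ES_useq: "OS (useq t) = fibz (4 * int t - 1) \<and> ES (useq t) = fibz (4 * int t + 1)"
proof (induction t)
  case 0
  have "OS (useq 0) = Sum_any (\<lambda>s::int. if s = -1 then 1 else 0)"
    unfolding OS_def by (rule Sum_any.cong) (auto simp: wt_def)
  moreover have "ES (useq 0) = Sum_any (\<lambda>s::int. if s = 0 then 1 else 0)"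
    unfolding ES_def by (rule Sum_any.cong) (auto simp: wt_def)
  moreover have "fibz (-1) = 1" "fibz 1 = 1" "fibz 0 = 0"
    using fibz.simps[of "-1"] fibz.simps[of 1] fibz.simps[of 0] by simp_all
  ultimately show ?case by simp
next
  case (Suc t)
  have supp: "\<And>s. 2 * int t + 2 \<le> \<bar>s\<bar> \<Longrightarrow> useq t s = 0" by (rule useq_supp)
  have o: "OS (useq (Suc t)) = 3 * ES (useq t) - OS (useq t)"
    by (simp add: OS_step[OF supp])
  have e: "ES (useq (Suc t)) = 3 * OS (useq (Suc t)) - ES (useq t)"
    by (simp add: ES_step[OF supp])
  have f1: "fibz (4 * int t - 1 + 4) = 3 * fibz (4 * int t - 1 + 2) - fibz (4 * int t - 1)" by (rule fibz_rec4)
  have f2: "fibz (4 * int t + 1 + 4) = 3 * fibz (4 * int t + 1 + 2) - fibz (4 * int t + 1)" by (rule fibz_rec4)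
  have o': "OS (useq (Suc t)) = fibz (4 * int (Suc t) - 1)"
    using o Suc.IH f1 by (simp add: algebra_simps)
  show ?case using o' e Suc.IH f2 by (simp add: algebra_simps)
qed


lemma nat_m1: "s \<le> -1 \<Longrightarrow> nat (- s - 1) = nat (- s) - 1" by simp

lemma stmt_O:
  fixes u :: "int \<Rightarrow> int"
  assumes supp: "\<And>s. M \<le> \<bar>s\<bar> \<Longrightarrow> u s = 0"
  shows "Sum_any (\<lambda>s::int. if s \<ge> 1 \<and> odd s then 2 ^ nat s * u s else 0)
       + Sum_any (\<lambda>s::int. if s \<ge> 1 \<and> odd s then 2 ^ (nat s - 1) * u (- s) else 0) = OS u"
proof -
  define g1 where "g1 s = (if s \<ge> 1 \<and> odd s then 2 ^ nat s * u s else 0)" for s :: int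
  define g2 where "g2 s = (if - s \<ge> 1 \<and> odd (- s) then 2 ^ (nat (- s) - 1) * u s else 0)" for s :: int
  have "Sum_any (\<lambda>s::int. if s \<ge> 1 \<and> odd s then 2 ^ (nat s - 1) * u (- s) else 0) = Sum_any (\<lambda>s. g2 (- s))"
    by (rule Sum_any.cong) (simp add: g2_def)
  also have "\<dots> = Sum_any g2" by (rule Sum_any_neg)
  finally have e2: "Sum_any (\<lambda>s::int. if s \<ge> 1 \<and> odd s then 2 ^ (nat s - 1) * u (- s) else 0) = Sum_any g2" .
  have e1: "Sum_any (\<lambda>s::int. if s \<ge> 1 \<and> odd s then 2 ^ nat s * u s else 0) = Sum_any g1"
    by (simp add: g1_def)
  have "Sum_any g1 + Sum_any g2 = Sum_any (\<lambda>s. g1 s + g2 s)"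
    by (rule Sum_any.distrib[symmetric]; rule fin_supp2[OF supp]; auto simp: g1_def g2_def split: if_splits)
  also have "\<dots> = OS u" unfolding OS_def
  proof (rule Sum_any.cong)
    fix s :: int
    consider "s \<ge> 1" | "s = 0" | "s \<le> -1" by linarith
    then show "g1 s + g2 s = (if odd s then 1 else 0) * wt s * u s"
    proof cases
      case 1 then show ?thesis by (simp add: g1_def g2_def wt_def)
    next
      case 2 then show ?thesis by (simp add: g1_def g2_def wt_def)
    next
      case 3 then show ?thesis by (simp add: g1_def g2_def wt_def nat_m1)
    qed
  qed
  finally show ?thesis using e1 e2 by simp
qed

lemma stmt_E:
  fixes u :: "int \<Rightarrow> int"
  assumes supp: "\<And>s. M \<le> \<bar>s\<bar> \<Longrightarrow> u s = 0"
  shows "Sum_any (\<lambda>s::int. if s \<ge> 0 \<and> even s then 2 ^ nat s * u s else 0)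
       + Sum_any (\<lambda>s::int. if s \<ge> 2 \<and> even s then 2 ^ (nat s - 1) * u (- s) else 0) = ES u"
proof -
  define g1 where "g1 s = (if s \<ge> 0 \<and> even s then 2 ^ nat s * u s else 0)" for s :: int
  define g2 where "g2 s = (if - s \<ge> 2 \<and> even (- s) then 2 ^ (nat (- s) - 1) * u s else 0)" for s :: int
  have "Sum_any (\<lambda>s::int. if s \<ge> 2 \<and> even s then 2 ^ (nat s - 1) * u (- s) else 0) = Sum_any (\<lambda>s. g2 (- s))"
    by (rule Sum_any.cong) (simp add: g2_def)
  also have "\<dots> = Sum_any g2" by (rule Sum_any_neg)
  finally have e2: "Sum_any (\<lambda>s::int. if s \<ge> 2 \<and> even s then 2 ^ (nat s - 1) * u (- s) else 0) = Sum_any g2" .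
  have e1: "Sum_any (\<lambda>s::int. if s \<ge> 0 \<and> even s then 2 ^ nat s * u s else 0) = Sum_any g1"
    by (simp add: g1_def)
  have "Sum_any g1 + Sum_any g2 = Sum_any (\<lambda>s. g1 s + g2 s)"
    by (rule Sum_any.distrib[symmetric]; rule fin_supp2[OF supp]; auto simp: g1_def g2_def split: if_splits)
  also have "\<dots> = ES u" unfolding ES_def
  proof (rule Sum_any.cong)
    fix s :: int
    consider "s \<ge> 0" | "s = -1" | "s \<le> -2" by linarith
    then show "g1 s + g2 s = (if even s then 1 else 0) * wt s * u s"
    proof cases
      case 1 then show ?thesis by (simp add: g1_def g2_def wt_def)
    next
      case 2 then show ?thesis by (simp add: g1_def g2_def wt_def)
    next
      case 3 then show ?thesis by (simp add: g1_def g2_def wt_def nat_m1)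
    qed
  qed
  finally show ?thesis using e1 e2 by simp
qed



fun cp :: "nat list \<Rightarrow> nat list \<Rightarrow> nat" where
  "cp (a # X) (b # Y) = (if a = b then Suc (cp X Y) else 0)"
| "cp _ _ = 0"

lemma cp_le1: "cp X Y \<le> length X"
  by (induction X Y rule: cp.induct) auto

lemma cp_le2: "cp X Y \<le> length Y"
  by (induction X Y rule: cp.induct) auto

lemma cp_sym: "cp X Y = cp Y X"
  by (induction X Y rule: cp.induct) auto

lemma cp_self: "cp X X = length X"
  by (induction X) auto

lemma cp_take: "cp X Y = length Y \<Longrightarrow> take (length Y) X = Y"
  by (induction X Y rule: cp.induct) (auto split: if_splits)

lemma cp_eq: "cp X Y = length Y \<Longrightarrow> length X = length Y \<Longrightarrow> X = Y"
  using cp_take by fastforce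

lemma cp_snoc: "cp X (Y @ [b]) = (if cp X Y = length Y \<and> length Y < length X \<and> X ! length Y = b then Suc (length Y) else cp X Y)"
proof (induction Y arbitrary: X)
  case Nil
  then show ?case by (cases X) auto
next
  case (Cons c Y)
  then show ?case by (cases X) auto
qed

definition W :: "tree3 \<Rightarrow> nat list" where
  "W z = rev (Rep_tree3 z)"

lemma W_inj: "W a = W b \<Longrightarrow> a = b"
  by (simp add: W_def Rep_tree3_inject)

lemma reduced_Rep: "reduced_word (Rep_tree3 z)"
  using Rep_tree3 by simp

lemma reduced_tl: "reduced_word (a # R) \<Longrightarrow> reduced_word R"
  unfolding reduced_word_def
proof (elim conjE, intro conjI allI impI)
  assume h: "\<forall>i. Suc i < length (a # R) \<longrightarrow> (a # R) ! i \<noteq> (a # R) ! Suc i" "\<forall>b\<in>set (a # R). b < 3"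
  then show "\<forall>b\<in>set R. b < 3" by simp
  fix i assume "Suc i < length R"
  then show "R ! i \<noteq> R ! Suc i" using h(1)[rule_format, of "Suc i"] by simp
qed

lemma reduced_drop: "reduced_word R \<Longrightarrow> reduced_word (drop k R)"
  unfolding reduced_word_def by (auto dest: in_set_dropD)

lemma reduced_Cons: "reduced_word (a # R) \<longleftrightarrow> a < 3 \<and> (R = [] \<or> a \<noteq> hd R) \<and> reduced_word R"
proof
  assume r: "reduced_word (a # R)"
  then have "a < 3" by (simp add: reduced_word_def)
  moreover have "R = [] \<or> a \<noteq> hd R"
  proof (cases R)
    case (Cons b R')
    with r have "(a # R) ! 0 \<noteq> (a # R) ! Suc 0" unfolding reduced_word_def by auto
    with Cons show ?thesis by simp
  qed simp
  ultimately show "a < 3 \<and> (R = [] \<or> a \<noteq> hd R) \<and> reduced_word R" using reduced_tl[OF r] by simp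
next
  assume h: "a < 3 \<and> (R = [] \<or> a \<noteq> hd R) \<and> reduced_word R"
  show "reduced_word (a # R)" unfolding reduced_word_def
  proof (intro conjI allI impI)
    show "\<forall>b\<in>set (a # R). b < 3" using h by (auto simp: reduced_word_def)
    fix i assume i: "Suc i < length (a # R)"
    show "(a # R) ! i \<noteq> (a # R) ! Suc i"
    proof (cases i)
      case 0
      then show ?thesis using h i by (cases R) auto
    next
      case (Suc j)
      then show ?thesis using h i by (auto simp: reduced_word_def)
    qed
  qed
qed

definition D :: "tree3 \<Rightarrow> tree3 \<Rightarrow> nat" where
  "D a z = length (W a) + length (W z) - 2 * cp (W a) (W z)"

lemma D_self: "D a a = 0"
  by (simp add: D_def cp_self)

lemma D_sym: "D a z = D z a"
  by (simp add: D_def cp_sym)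

lemma D_zero: "D a z = 0 \<Longrightarrow> a = z"
proof -
  assume "D a z = 0"
  then have "length (W a) + length (W z) \<le> 2 * cp (W a) (W z)" by (simp add: D_def)
  then have "cp (W a) (W z) = length (W z)" "length (W a) = length (W z)"
    using cp_le1[of "W a" "W z"] cp_le2[of "W a" "W z"] by linarith+
  then show "a = z" using cp_eq W_inj by blast
qed

lemma adj_W: "adj w z \<longleftrightarrow> (\<exists>b. W w = W z @ [b]) \<or> (\<exists>b. W z = W w @ [b])"
  unfolding adj_def W_def by (metis rev.simps(2) rev_rev_ident)

lemma adj_sym: "adj w z \<Longrightarrow> adj z w"
  unfolding adj_def by blast

lemma adj_irrefl: "\<not> adj z z"
  unfolding adj_def by (metis impossible_Cons le_refl)

lemma D_snoc_close:
  assumes "W w = W z @ [b]" "cp (W a) (W z) = length (W z)" "length (W z) < length (W a)" "W a ! length (W z) = b"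
  shows "D a z = D a w + 1"
proof -
  have "cp (W a) (W w) = Suc (length (W z))" using assms by (simp add: cp_snoc)
  then show ?thesis using assms cp_le1[of "W a" "W z"] by (simp add: D_def)
qed

lemma D_snoc_far:
  assumes "W w = W z @ [b]" "\<not> (cp (W a) (W z) = length (W z) \<and> length (W z) < length (W a) \<and> W a ! length (W z) = b)"
  shows "D a w = D a z + 1"
proof -
  have "cp (W a) (W w) = cp (W a) (W z)" using assms by (simp add: cp_snoc)
  then show ?thesis using assms cp_le1[of "W a" "W z"] cp_le2[of "W a" "W z"] by (simp add: D_def)
qed

lemma D_snoc: "W w = W z @ [b] \<Longrightarrow> D a w = D a z + 1 \<or> D a z = D a w + 1"
  using D_snoc_close D_snoc_far by blast

lemma nbD: "adj w z \<Longrightarrow> D a w = D a z + 1 \<or> D a z = D a w + 1"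
  unfolding adj_W using D_snoc by metis


lemma Rep_Abs: "reduced_word R \<Longrightarrow> Rep_tree3 (Abs_tree3 R) = R"
  by (simp add: Abs_tree3_inverse)

lemma closer_ex:
  assumes "z \<noteq> a"
  shows "\<exists>w. adj w z \<and> D a w + 1 = D a z"
proof (cases "cp (W a) (W z) < length (W z)")
  case True
  then obtain c R' where R: "Rep_tree3 z = c # R'"
    by (cases "Rep_tree3 z") (auto simp: W_def)
  have red: "reduced_word R'" using reduced_Rep[of z] R reduced_tl by metis
  define w where "w = Abs_tree3 R'"
  have Rw: "Rep_tree3 w = R'" using red by (simp add: w_def Rep_Abs)
  have Wz: "W z = W w @ [c]" by (simp add: W_def R Rw)
  have adj: "adj w z" unfolding adj_def using R Rw by blast
  have "\<not> (cp (W a) (W w) = length (W w) \<and> length (W w) < length (W a) \<and> W a ! length (W w) = c)"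
  proof
    assume "cp (W a) (W w) = length (W w) \<and> length (W w) < length (W a) \<and> W a ! length (W w) = c"
    then have "cp (W a) (W z) = length (W z)" using Wz by (simp add: cp_snoc)
    with True show False by simp
  qed
  then have "D a z = D a w + 1" using D_snoc_far[OF Wz] by blast
  with adj show ?thesis by auto
next
  case False
  then have cpz: "cp (W a) (W z) = length (W z)" using cp_le2[of "W a" "W z"] by linarith
  have lt: "length (W z) < length (W a)"
  proof (rule ccontr)
    assume "\<not> length (W z) < length (W a)"
    then have "length (W a) = length (W z)" using cp_le1[of "W a" "W z"] cpz by linarith
    then have "W a = W z" using cp_eq cpz by blast
    then show False using assms W_inj by metis
  qed
  define b where "b = W a ! length (W z)"
  have tk: "take (Suc (length (W z))) (W a) = W z @ [b]"
    using cp_take[OF cpz] lt by (simp add: take_Suc_conv_app_nth b_def)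
  define Rn where "Rn = rev (W z @ [b])"
  have "Rn = drop (length (W a) - Suc (length (W z))) (Rep_tree3 a)"
    unfolding Rn_def tk[symmetric] by (simp add: rev_take W_def)
  then have red: "reduced_word Rn" using reduced_drop reduced_Rep by metis
  define w where "w = Abs_tree3 Rn"
  have Ww: "W w = W z @ [b]" using red by (simp add: w_def W_def Rep_Abs Rn_def)
  have adj: "adj w z" using Ww adj_W by blast
  have "D a z = D a w + 1" using D_snoc_close[OF Ww cpz lt] b_def by simp
  with adj show ?thesis by auto
qed

lemma closer_uniq:
  assumes "adj w z" "adj w' z" "D a w < D a z" "D a w' < D a z"
  shows "w = w'"
proof -
  have cl: "\<And>v. adj v z \<Longrightarrow> D a v < D a z \<Longrightarrow>
     (\<exists>c. W z = W v @ [c] \<and> \<not> (cp (W a) (W v) = length (W v) \<and> length (W v) < length (W a) \<and> W a ! length (W v) = c))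
   \<or> (W v = W z @ [W a ! length (W z)] \<and> cp (W a) (W z) = length (W z) \<and> length (W z) < length (W a))"
  proof -
    fix v assume av: "adj v z" and lt: "D a v < D a z"
    from av consider b where "W v = W z @ [b]" | c where "W z = W v @ [c]" unfolding adj_W by blast
    then show "?thesis v"
    proof cases
      case 1
      then show ?thesis using D_snoc_far[OF 1, of a] lt by auto
    next
      case 2
      then show ?thesis using D_snoc_close[OF 2, of a] lt by auto
    qed
  qed
  from cl[OF assms(1) assms(3)] cl[OF assms(2) assms(4)] show ?thesis
  proof (elim disjE exE conjE)
    fix c c' assume "W z = W w @ [c]" "W z = W w' @ [c']"
    then have "W w = W w'" by simp
    then show ?thesis by (rule W_inj)
  next
    assume "W w = W z @ [W a ! length (W z)]" "W w' = W z @ [W a ! length (W z)]"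
    then show ?thesis using W_inj by metis
  next
    fix c assume h: "W z = W w @ [c]" "\<not> (cp (W a) (W w) = length (W w) \<and> length (W w) < length (W a) \<and> W a ! length (W w) = c)"
      "cp (W a) (W z) = length (W z)"
    have "cp (W a) (W z) = cp (W a) (W w)" using h(1,2) cp_snoc[of "W a" "W w" c] by auto
    then show ?thesis using h cp_le2[of "W a" "W w"] by simp
  next
    fix c assume h: "W z = W w' @ [c]" "\<not> (cp (W a) (W w') = length (W w') \<and> length (W w') < length (W a) \<and> W a ! length (W w') = c)"
      "cp (W a) (W z) = length (W z)"
    have "cp (W a) (W z) = cp (W a) (W w')" using h(1,2) cp_snoc[of "W a" "W w'" c] by auto
    then show ?thesis using h cp_le2[of "W a" "W w'"] by simp
  qed
qed


lemma Rep_nb: "Rep_tree3 ` {w. adj w z} = {V. reduced_word V \<and> ((\<exists>a. Rep_tree3 z = a # V) \<or> (\<exists>a. V = a # Rep_tree3 z))}"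
proof
  show "Rep_tree3 ` {w. adj w z} \<subseteq> {V. reduced_word V \<and> ((\<exists>a. Rep_tree3 z = a # V) \<or> (\<exists>a. V = a # Rep_tree3 z))}"
    using reduced_Rep by (auto simp: adj_def)
  show "{V. reduced_word V \<and> ((\<exists>a. Rep_tree3 z = a # V) \<or> (\<exists>a. V = a # Rep_tree3 z))} \<subseteq> Rep_tree3 ` {w. adj w z}"
  proof
    fix V assume "V \<in> {V. reduced_word V \<and> ((\<exists>a. Rep_tree3 z = a # V) \<or> (\<exists>a. V = a # Rep_tree3 z))}"
    then have V: "reduced_word V" "(\<exists>a. Rep_tree3 z = a # V) \<or> (\<exists>a. V = a # Rep_tree3 z)" by auto
    have "Rep_tree3 (Abs_tree3 V) = V" using V(1) by (rule Rep_Abs)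
    moreover have "adj (Abs_tree3 V) z" unfolding adj_def using V(2) calculation by auto
    ultimately show "V \<in> Rep_tree3 ` {w. adj w z}" by (metis (mono_tags, lifting) image_eqI mem_Collect_eq)
  qed
qed

lemma nb_words_card:
  assumes "reduced_word R"
  shows "finite {V. reduced_word V \<and> ((\<exists>a. R = a # V) \<or> (\<exists>a. V = a # R))}
       \<and> card {V. reduced_word V \<and> ((\<exists>a. R = a # V) \<or> (\<exists>a. V = a # R))} = 3"
proof (cases R)
  case Nil
  have "{V. reduced_word V \<and> ((\<exists>a. R = a # V) \<or> (\<exists>a. V = a # R))} = {[0], [1], [2]}"
    using Nil by (auto simp: reduced_Cons) (auto simp: reduced_word_def)
  then show ?thesis by simp
next
  case (Cons c R')
  have c3: "c < 3" and r': "reduced_word R'" using assms Cons by (auto simp: reduced_Cons)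
  obtain d1 d2 where d: "{a. a < 3 \<and> a \<noteq> c} = {d1, d2}" "d1 \<noteq> d2"
  proof -
    consider "c = 0" | "c = 1" | "c = 2" using c3 by linarith
    then show ?thesis
    proof cases
      case 1
      have "{a::nat. a < 3 \<and> a \<noteq> c} = {1, 2}" by (rule set_eqI) (simp add: 1; presburger)
      then show ?thesis using that[of 1 2] by auto
    next
      case 2
      have "{a::nat. a < 3 \<and> a \<noteq> c} = {0, 2}" by (rule set_eqI) (simp add: 2; presburger)
      then show ?thesis using that[of 0 2] by auto
    next
      case 3
      have "{a::nat. a < 3 \<and> a \<noteq> c} = {0, 1}" by (rule set_eqI) (simp add: 3; presburger)
      then show ?thesis using that[of 0 1] by auto
    qed
  qed
  have "{V. reduced_word V \<and> ((\<exists>a. R = a # V) \<or> (\<exists>a. V = a # R))} = insert R' ((\<lambda>a. a # R) ` {a. a < 3 \<and> a \<noteq> c})"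
    using Cons assms r' by (auto simp: reduced_Cons)
  also have "\<dots> = {R', d1 # R, d2 # R}" using d by auto
  finally show ?thesis using d(2) Cons by auto
qed

lemma nb_card: "finite {w. adj w z} \<and> card {w. adj w z} = 3"
proof -
  have inj: "inj_on Rep_tree3 {w. adj w z}" by (meson Rep_tree3_inject inj_onI)
  have h: "finite (Rep_tree3 ` {w. adj w z}) \<and> card (Rep_tree3 ` {w. adj w z}) = 3"
    unfolding Rep_nb by (rule nb_words_card[OF reduced_Rep])
  then show ?thesis using inj finite_imageD card_image by metis
qed


lemma walk_single: "walk [a]"
  by (simp add: walk_def)

lemma walk_cons: "walk p \<Longrightarrow> adj u (hd p) \<Longrightarrow> walk (u # p)"
  unfolding walk_def
proof (intro conjI allI impI)
  fix i assume h: "p \<noteq> [] \<and> (\<forall>i. Suc i < length p \<longrightarrow> adj (p ! i) (p ! Suc i))" "adj u (hd p)"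
    and i: "Suc i < length (u # p)"
  show "adj ((u # p) ! i) ((u # p) ! Suc i)"
  proof (cases i)
    case 0 then show ?thesis using h by (simp add: hd_conv_nth)
  next
    case (Suc j) then show ?thesis using h i by simp
  qed
qed simp

lemma walk_ConsD: "walk (a # b # q) \<Longrightarrow> adj a b \<and> walk (b # q)"
  unfolding walk_def
proof (elim conjE, intro conjI allI impI)
  assume h: "\<forall>i. Suc i < length (a # b # q) \<longrightarrow> adj ((a # b # q) ! i) ((a # b # q) ! Suc i)"
  show "adj a b" using h[rule_format, of 0] by simp
  fix i assume "Suc i < length (b # q)"
  then show "adj ((b # q) ! i) ((b # q) ! Suc i)" using h[rule_format, of "Suc i"] by simp
qed simp

lemma walk_drop: "walk p \<Longrightarrow> i < length p \<Longrightarrow> walk (drop i p)"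
  unfolding walk_def by auto

lemma walk_D: "walk (a # q) \<Longrightarrow> D a (last (a # q)) \<le> length q"
proof (induction q arbitrary: a)
  case Nil
  then show ?case by (simp add: D_self)
next
  case (Cons b q)
  from walk_ConsD[OF Cons.prems] have ab: "adj a b" and wb: "walk (b # q)" by auto
  define l where "l = last (b # q)"
  have h1: "D b l \<le> length q" using Cons.IH[OF wb] by (simp add: l_def)
  have h2: "D l a = D l b + 1 \<or> D l b = D l a + 1" using nbD[OF ab] by blast
  have "D a l \<le> Suc (length q)" using h1 h2 D_sym[of a l] D_sym[of b l] by linarith
  moreover have "last (a # b # q) = l" by (simp add: l_def)
  ultimately show ?case by simp
qed

lemma walk_ex: "\<exists>p. walk p \<and> hd p = u \<and> last p = v \<and> length p = Suc (D u v)"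
proof (induction "D u v" arbitrary: u)
  case 0
  then have "u = v" using D_zero by metis
  then show ?case using walk_single by (intro exI[of _ "[u]"]) (auto simp: D_self)
next
  case (Suc n)
  then have "u \<noteq> v" using D_self by auto
  then obtain w where w: "adj w u" "D v w + 1 = D v u" using closer_ex by blast
  have "D w v + 1 = D u v" using w(2) by (simp add: D_sym)
  then have "D w v = n" using Suc.hyps(2) by linarith
  then obtain p where p: "walk p" "hd p = w" "last p = v" "length p = Suc n" using Suc.hyps(1) by metis
  have "walk (u # p)" using walk_cons[OF p(1)] adj_sym[OF w(1)] p(2) by simp
  moreover have "p \<noteq> []" using p(4) by auto
  ultimately show ?case using p Suc.hyps(2) by (intro exI[of _ "u # p"]) auto
qed

lemma walk_D': "walk p \<Longrightarrow> D (hd p) (last p) \<le> length p - 1"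
  using walk_D[of "hd p" "tl p"] by (cases p) (auto simp: walk_def)

lemma dist_eq: "dist u v = D u v"
  unfolding dist_def
proof (rule Least_equality)
  show "\<exists>p. walk p \<and> hd p = u \<and> last p = v \<and> length p = Suc (D u v)" by (rule walk_ex)
  fix n assume "\<exists>p. walk p \<and> hd p = u \<and> last p = v \<and> length p = Suc n"
  then obtain p where "walk p" "hd p = u" "last p = v" "length p = Suc n" by blast
  then show "D u v \<le> n" using walk_D' by fastforce
qed

lemma D_adj: "adj a b \<Longrightarrow> D a b = 1"
  using nbD[OF adj_sym, of a b a] D_self by auto

lemma geo_char:
  assumes xy: "adj x y"
  shows "(\<exists>p. geodesic p x z \<and> y \<in> set p) \<longleftrightarrow> D y z < D x z"
proof
  assume "\<exists>p. geodesic p x z \<and> y \<in> set p"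
  then obtain p where g: "walk p" "hd p = x" "last p = z" "length p = Suc (D x z)" and "y \<in> set p"
    by (auto simp: geodesic_def dist_eq)
  then obtain i where i: "i < length p" "p ! i = y" by (metis in_set_conv_nth)
  have "i \<noteq> 0"
  proof
    assume "i = 0"
    moreover have "p \<noteq> []" using i by auto
    ultimately have "x = y" using g(2) i(2) by (simp add: hd_conv_nth)
    then show False using xy adj_irrefl by simp
  qed
  have "walk (drop i p)" using walk_drop g i by blast
  moreover have "hd (drop i p) = y" using i by (simp add: hd_drop_conv_nth)
  moreover have "last (drop i p) = z" using i g by simp
  ultimately have "D y z \<le> length (drop i p) - 1" using walk_D'[of "drop i p"] by simp
  then show "D y z < D x z" using g(4) i \<open>i \<noteq> 0\<close> by simp
next
  assume lt: "D y z < D x z"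
  have e: "D x z = D y z + 1" using nbD[OF xy, of z] lt unfolding D_sym[of z x] D_sym[of z y] by linarith
  obtain q where q: "walk q" "hd q = y" "last q = z" "length q = Suc (D y z)" using walk_ex by blast
  have "walk (x # q)" using walk_cons[OF q(1)] xy q(2) by simp
  moreover have "q \<noteq> []" using q(4) by auto
  ultimately have "geodesic (x # q) x z \<and> y \<in> set (x # q)"
    using q e by (auto simp: geodesic_def dist_eq)
  then show "\<exists>p. geodesic p x z \<and> y \<in> set p" by blast
qed


definition lev :: "tree3 \<Rightarrow> tree3 \<Rightarrow> tree3 \<Rightarrow> int" where
  "lev x y z = (if D y z < D x z then - int (D x z) else int (D x z))"

lemma diffxy: "adj x y \<Longrightarrow> D x z = D y z + 1 \<or> D y z = D x z + 1"
  using nbD[of x y z] unfolding D_sym[of z x] D_sym[of z y] by blast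

lemma Yside:
  assumes xy: "adj x y" and lt: "D y z < D x z" and zy: "z \<noteq> y" and pz: "adj p z" and px: "D x p < D x z"
  shows "D y p < D x p"
proof -
  obtain q where q: "adj q z" "D y q + 1 = D y z" using closer_ex[OF zy] by blast
  have e1: "D x z = D y z + 1" using diffxy[OF xy, of z] lt by linarith
  have e2: "D x q = D x z + 1 \<or> D x z = D x q + 1" by (rule nbD[OF q(1)])
  have e3: "D x q = D y q + 1 \<or> D y q = D x q + 1" by (rule diffxy[OF xy])
  have "D x q < D x z" using e1 e2 e3 q(2) by linarith
  then have "q = p" using closer_uniq[OF q(1) pz _ px] by blast
  have e4: "D x p = D x z + 1 \<or> D x z = D x p + 1" by (rule nbD[OF pz])
  have "D y p + 1 = D y z" using q(2) \<open>q = p\<close> by simp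
  then show ?thesis using e1 e4 px by linarith
qed

lemma sum3:
  assumes "finite S" "card S = 3" "p \<in> S" "\<And>w. w \<in> S \<Longrightarrow> w \<noteq> p \<Longrightarrow> g w = (c::int)"
  shows "sum g S = g p + 2 * c"
proof -
  have "sum g S = g p + sum g (S - {p})" using assms(1,3) by (simp add: sum.remove)
  also have "sum g (S - {p}) = sum (\<lambda>_. c) (S - {p})" using assms(4) by (intro sum.cong) auto
  also have "\<dots> = 2 * c" using assms(1,2,3) by simp
  finally show ?thesis .
qed

lemma nb_sum:
  assumes xy: "adj x y"
  shows "(\<Sum>w\<in>{w. adj w z}. f (lev x y w)) = NN f (lev x y z)"
proof -
  let ?S = "{w. adj w z}"
  have fS: "finite ?S" and cS: "card ?S = 3" using nb_card by auto
  have Dxy: "D x y = 1" by (rule D_adj[OF xy])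
  have Dyx: "D y x = 1" by (rule D_adj[OF adj_sym[OF xy]])
  show ?thesis
  proof (cases "z = x")
    case True
    have lz: "lev x y z = 0" using True Dyx by (simp add: lev_def D_self)
    have yS: "y \<in> ?S" using True adj_sym[OF xy] by simp
    have ly: "lev x y y = -1" using Dxy by (simp add: lev_def D_self)
    have lw: "lev x y w = 1" if "w \<in> ?S" "w \<noteq> y" for w
    proof -
      have aw: "adj w x" using that True by simp
      have "D x w = 1" using nbD[OF aw, of x] by (simp add: D_self)
      moreover have "D y w = D y x + 1 \<or> D y x = D y w + 1" by (rule nbD[OF aw])
      moreover have "D y w \<noteq> 0" using D_zero that(2) by metis
      ultimately show ?thesis using Dyx by (simp add: lev_def)
    qed
    have "(\<Sum>w\<in>?S. f (lev x y w)) = f (lev x y y) + 2 * f 1"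
      by (rule sum3[OF fS cS yS]) (simp add: lw)
    then show ?thesis using lz ly by (simp add: NN_def)
  next
    case False
    then obtain p where p: "adj p z" "D x p + 1 = D x z" using closer_ex by blast
    have pS: "p \<in> ?S" using p by simp
    have dz: "D x z \<noteq> 0" using D_zero False by metis
    have oth: "D x w = D x z + 1" if "w \<in> ?S" "w \<noteq> p" for w
    proof -
      have aw: "adj w z" using that by simp
      have "D x w = D x z + 1 \<or> D x z = D x w + 1" by (rule nbD[OF aw])
      moreover have "\<not> D x w < D x z"
      proof
        assume "D x w < D x z"
        then have "w = p" using closer_uniq[OF aw p(1)] p(2) by simp
        then show False using that by simp
      qed
      ultimately show ?thesis by linarith
    qed
    show ?thesis
    proof (cases "D y z < D x z")
      case False
      then have eyz: "D y z = D x z + 1" using diffxy[OF xy, of z] by linarith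
      have lz: "lev x y z = int (D x z)" using False by (simp add: lev_def)
      have "D y p = D y z + 1 \<or> D y z = D y p + 1" by (rule nbD[OF p(1)])
      then have lp: "lev x y p = lev x y z - 1" using eyz p(2) lz by (auto simp: lev_def)
      have lw: "lev x y w = lev x y z + 1" if "w \<in> ?S" "w \<noteq> p" for w
      proof -
        have aw: "adj w z" using that by simp
        have xw: "D x w = D x z + 1" using oth that by blast
        have "\<not> D y w < D x w"
        proof
          assume yw: "D y w < D x w"
          have "w \<noteq> y"
          proof
            assume "w = y"
            then have "D y z = 1" using D_adj aw by simp
            then show False using eyz dz by simp
          qed
          then have "D y z < D x z" using Yside[OF xy yw _ adj_sym[OF aw]] xw by simp
          then show False using False by simp
        qed
        then show ?thesis using xw lz by (simp add: lev_def)
      qed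
      have "(\<Sum>w\<in>?S. f (lev x y w)) = f (lev x y p) + 2 * f (lev x y z + 1)"
        by (rule sum3[OF fS cS pS]) (simp add: lw)
      moreover have "\<not> lev x y z < 0" using lz by simp
      ultimately show ?thesis using lp by (simp add: NN_def)
    next
      case True
      then have exz: "D x z = D y z + 1" using diffxy[OF xy, of z] by linarith
      have lz: "lev x y z = - int (D x z)" using True by (simp add: lev_def)
      have lp: "lev x y p = lev x y z + 1"
      proof (cases "z = y")
        case True
        then have "D x p = 0" using Dxy p(2) by simp
        then have "p = x" using D_zero by metis
        then show ?thesis using lz True Dxy Dyx by (simp add: lev_def D_self)
      next
        case False
        have "D y p < D x p" using Yside[OF xy \<open>D y z < D x z\<close> False p(1)] p(2) by simp
        then show ?thesis using lz p(2) by (simp add: lev_def)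
      qed
      have lw: "lev x y w = lev x y z - 1" if "w \<in> ?S" "w \<noteq> p" for w
      proof -
        have aw: "adj w z" using that by simp
        have xw: "D x w = D x z + 1" using oth that by blast
        have "D y w = D y z + 1 \<or> D y z = D y w + 1" by (rule nbD[OF aw])
        then have "D y w < D x w" using xw exz by linarith
        then show ?thesis using xw lz by (simp add: lev_def)
      qed
      have "(\<Sum>w\<in>?S. f (lev x y w)) = f (lev x y p) + 2 * f (lev x y z - 1)"
        by (rule sum3[OF fS cS pS]) (simp add: lw)
      moreover have "lev x y z < 0" using lz dz by simp
      ultimately show ?thesis using lp by (simp add: NN_def)
    qed
  qed
qed


lemma odd_lev: "odd (lev x y z) \<longleftrightarrow> odd (D x z)"
  by (simp add: lev_def)

lemma lev_0: "lev x y z = 0 \<longleftrightarrow> z = x"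
proof
  assume "lev x y z = 0"
  then have "D x z = 0" by (simp add: lev_def split: if_splits)
  then show "z = x" using D_zero by metis
qed (simp add: lev_def D_self)

lemma lev_m1:
  assumes xy: "adj x y"
  shows "lev x y z = -1 \<longleftrightarrow> z = y"
proof
  assume h: "lev x y z = -1"
  then have "D y z < D x z" "D x z = 1" by (simp_all add: lev_def split: if_splits)
  then have "D y z = 0" by simp
  then show "z = y" using D_zero by metis
next
  assume "z = y"
  then show "lev x y z = -1" using D_adj[OF xy] by (simp add: lev_def D_self)
qed

lemma rr_lev:
  assumes xy: "adj x y"
  shows "rr x y (2 * t) z = useq t (lev x y z)"
proof (induction t arbitrary: z)
  case 0
  have "x \<noteq> y" using xy adj_irrefl by metis
  then show ?case using lev_0[of x y z] lev_m1[OF xy, of z] by (auto simp: sgen_def)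
next
  case (Suc t)
  define u where "u = useq t"
  define v where "v s = (if odd s then u_odd u s else u s)" for s
  have IH: "rr x y (2 * t) w = u (lev x y w)" for w using Suc.IH u_def by simp
  have s1: "rr x y (Suc (2 * t)) w = v (lev x y w)" for w
  proof -
    have sum: "(\<Sum>w'\<in>{w'. adj w' w}. rr x y (2 * t) w') = NN u (lev x y w)"
      unfolding IH by (rule nb_sum[OF xy])
    show ?thesis
      using sum IH[of w] odd_lev[of x y w]
      by (simp add: Sigma_odd_def refl_def dist_eq v_def u_odd_def NN_def)
  qed
  have s2: "rr x y (Suc (Suc (2 * t))) w = u_step u (lev x y w)" for w
  proof -
    have sum: "(\<Sum>w'\<in>{w'. adj w' w}. rr x y (Suc (2 * t)) w') = NN v (lev x y w)"
      unfolding s1 by (rule nb_sum[OF xy])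
    have nv: "even s \<Longrightarrow> NN v s = NN (u_odd u) s" for s by (simp add: NN_def v_def)
    show ?thesis
      using sum s1[of w] odd_lev[of x y w] nv[of "lev x y w"]
      by (simp add: Sigma_even_def refl_def dist_eq v_def u_step_def NN_def)
  qed
  have "2 * Suc t = Suc (Suc (2 * t))" by simp
  then show ?case using s2 u_def by simp
qed

theorem mainTheorem2:
  fixes x y :: tree3 and t :: nat
  assumes "adj x y"
  shows "(\<forall>s::int. s \<ge> 0 \<longrightarrow> (\<forall>z \<in> Ts x y (nat s). useq t s = rr x y (2 * t) z))
       \<and> (\<forall>s::int. s \<le> -1 \<longrightarrow> (\<forall>z \<in> Ts' x y (nat (- s)). useq t s = rr x y (2 * t) z))
       \<and> fibz (4 * int t - 1) =
           Sum_any (\<lambda>s::int. if s \<ge> 1 \<and> odd s then 2 ^ nat s * useq t s else 0)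
         + Sum_any (\<lambda>s::int. if s \<ge> 1 \<and> odd s then 2 ^ (nat s - 1) * useq t (- s) else 0)
       \<and> fibz (4 * int t + 1) =
           Sum_any (\<lambda>s::int. if s \<ge> 0 \<and> even s then 2 ^ nat s * useq t s else 0)
         + Sum_any (\<lambda>s::int. if s \<ge> 2 \<and> even s then 2 ^ (nat s - 1) * useq t (- s) else 0)"
proof (intro conjI allI impI ballI)
  fix s :: int and z assume s: "s \<ge> 0" and z: "z \<in> Ts x y (nat s)"
  then have "dist x z = nat s" "\<not> (\<exists>p. geodesic p x z \<and> y \<in> set p)" by (auto simp: Ts_def)
  then have "D x z = nat s" "\<not> D y z < D x z" using geo_char[OF assms] by (auto simp: dist_eq)
  then have "lev x y z = s" using s by (simp add: lev_def)
  then show "useq t s = rr x y (2 * t) z" using rr_lev[OF assms] by simp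
next
  fix s :: int and z assume s: "s \<le> -1" and z: "z \<in> Ts' x y (nat (- s))"
  then have "dist x z = nat (- s)" "\<exists>p. geodesic p x z \<and> y \<in> set p" by (auto simp: Ts'_def)
  then have "D x z = nat (- s)" "D y z < D x z" using geo_char[OF assms] by (auto simp: dist_eq)
  then have "lev x y z = s" using s by (simp add: lev_def)
  then show "useq t s = rr x y (2 * t) z" using rr_lev[OF assms] by simp
next
  show "fibz (4 * int t - 1) =
           Sum_any (\<lambda>s::int. if s \<ge> 1 \<and> odd s then 2 ^ nat s * useq t s else 0)
         + Sum_any (\<lambda>s::int. if s \<ge> 1 \<and> odd s then 2 ^ (nat s - 1) * useq t (- s) else 0)"
    using stmt_O[where u="useq t" and M="2 * int t + 2", OF useq_supp] OS_ES_useq[of t] by simp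
  show "fibz (4 * int t + 1) =
           Sum_any (\<lambda>s::int. if s \<ge> 0 \<and> even s then 2 ^ nat s * useq t s else 0)
         + Sum_any (\<lambda>s::int. if s \<ge> 2 \<and> even s then 2 ^ (nat s - 1) * useq t (- s) else 0)"
    using stmt_E[where u="useq t" and M="2 * int t + 2", OF useq_supp] OS_ES_useq[of t] by simp
qed

end
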